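(* For all real $a\geq1$ and $\lambda\geq1$, $$\frac{c(\lambda a)}{\lambda a}\leq\frac{c(a)}{a}.$$
   Context: $c(a):=\inf\{A>0: E(1,a)\text{ symplectically embeds into } C(A)\}$ for real $a\geq1$, where $E(1,a)=\{\pi(x_1^2+y_1^2)+\pi(x_2^2+y_2^2)/a<1\}\subset\mathbb{R}^4$ with the standard symplectic form, and $C(A)=D^2(A)\times D^2(A)$ with $D^2(A)$ the open disc of area $A$. *)

theory Defs
  imports "HOL-Analysis.Analysis"
begin

text \<open>Coordinates on R^4 = real^4: z = (x1, y1, x2, y2) = (z$1, z$2, z$3, z$4).\<close>

definition omega4 :: "real^4 \<Rightarrow> real^4 \<Rightarrow> real" where
  "omega4 u v = u$1 * v$2 - u$2 * v$1 + u$3 * v$4 - u$4 * v$3"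

definition ellipsoid :: "real \<Rightarrow> (real^4) set" where
  "ellipsoid a = {z. pi * ((z$1)^2 + (z$2)^2) + pi * ((z$3)^2 + (z$4)^2) / a < 1}"

definition polydisk :: "real \<Rightarrow> (real^4) set" where
  "polydisk A = {z. pi * ((z$1)^2 + (z$2)^2) < A \<and> pi * ((z$3)^2 + (z$4)^2) < A}"

primrec Ck_on :: "nat \<Rightarrow> 'a::euclidean_space set \<Rightarrow> ('a \<Rightarrow> 'b::real_normed_vector) \<Rightarrow> bool" where
  "Ck_on 0 U f = continuous_on U f"
| "Ck_on (Suc k) U f = (\<exists>f'. (\<forall>x\<in>U. (f has_derivative f' x) (at x)) \<and>
                              (\<forall>b\<in>Basis. Ck_on k U (\<lambda>x. f' x b)))"

definition smooth_on :: "'a::euclidean_space set \<Rightarrow> ('a \<Rightarrow> 'b::real_normed_vector) \<Rightarrow> bool" where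
  "smooth_on U f = (\<forall>k. Ck_on k U f)"

definition symplectic_embedding :: "(real^4 \<Rightarrow> real^4) \<Rightarrow> (real^4) set \<Rightarrow> (real^4) set \<Rightarrow> bool" where
  "symplectic_embedding \<phi> U V =
     (smooth_on U \<phi> \<and> inj_on \<phi> U \<and> continuous_on (\<phi> ` U) (inv_into U \<phi>) \<and> \<phi> ` U \<subseteq> V \<and>
      (\<forall>x\<in>U. \<exists>D. (\<phi> has_derivative D) (at x) \<and> (\<forall>u v. omega4 (D u) (D v) = omega4 u v)))"

definition cap :: "real \<Rightarrow> real" where
  "cap a = Inf {A::real. 0 < A \<and> (\<exists>\<phi>. symplectic_embedding \<phi> (ellipsoid a) (polydisk A))}"

end

theory Submission
  imports Defs
begin

lemma Ck_const: "Ck_on k U (\<lambda>x. c)"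
proof (induction k arbitrary: c)
  case 0 then show ?case by simp
next
  case (Suc k)
  show ?case
    by (simp, rule exI[of _ "\<lambda>x h. 0"]) (auto intro: Suc)
qed

lemma Ck_id: "Ck_on k U (\<lambda>x. x)"
proof (cases k)
  case 0 then show ?thesis by (simp add: continuous_on_id)
next
  case (Suc m)
  show ?thesis unfolding Suc
    by (simp, rule exI[of _ "\<lambda>x h. h"]) (auto intro: Ck_const)
qed

lemma Ck_scale:
  fixes f :: "'a::euclidean_space \<Rightarrow> 'b::real_normed_vector"
  shows "Ck_on k U f \<Longrightarrow> (\<forall>x\<in>V. t *\<^sub>R x \<in> U) \<Longrightarrow> Ck_on k V (\<lambda>x. c *\<^sub>R f (t *\<^sub>R x))"
proof (induction k arbitrary: f c)
  case 0
  have "continuous_on V (f \<circ> (\<lambda>x. t *\<^sub>R x))"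
    apply (rule continuous_on_compose)
     apply (intro continuous_intros)
    using 0 by (auto intro: continuous_on_subset)
  then show ?case by (auto simp: o_def intro!: continuous_intros)
next
  case (Suc k)
  from Suc.prems obtain f' where d: "\<forall>x\<in>U. (f has_derivative f' x) (at x)"
    and c: "\<forall>b\<in>Basis. Ck_on k U (\<lambda>x. f' x b)" by auto
  show ?case
  proof (simp, intro exI[of _ "\<lambda>x h. (c*t) *\<^sub>R f' (t *\<^sub>R x) h"] conjI ballI)
    fix x assume x: "x \<in> V"
    then have tx: "t *\<^sub>R x \<in> U" using Suc.prems by auto
    have fd: "(f has_derivative f' (t *\<^sub>R x)) (at (t *\<^sub>R x))" using d tx by auto
    have lin: "linear (f' (t *\<^sub>R x))" using fd has_derivative_linear by blast
    have "((\<lambda>x. f (t *\<^sub>R x)) has_derivative (\<lambda>h. f' (t *\<^sub>R x) (t *\<^sub>R h))) (at x)"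
    proof -
      have sd: "((\<lambda>x. t *\<^sub>R x) has_derivative (\<lambda>h. t *\<^sub>R h)) (at x)"
        by (intro derivative_eq_intros) auto
      show ?thesis using has_derivative_compose[OF sd fd] by (simp add: o_def)
    qed
    then have "((\<lambda>x. c *\<^sub>R f (t *\<^sub>R x)) has_derivative (\<lambda>h. c *\<^sub>R f' (t *\<^sub>R x) (t *\<^sub>R h))) (at x)"
      by (intro derivative_intros)
    then show "((\<lambda>x. c *\<^sub>R f (t *\<^sub>R x)) has_derivative (\<lambda>h. (c*t) *\<^sub>R f' (t *\<^sub>R x) h)) (at x)"
      using lin by (simp add: linear_cmul)
  next
    fix b :: 'a assume "b \<in> Basis"
    then show "Ck_on k V (\<lambda>x. (c * t) *\<^sub>R f' (t *\<^sub>R x) b)"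
      using Suc.IH c Suc.prems(2) by blast
  qed
qed

lemma ell_scale:
  fixes x :: "real^4"
  assumes l: "l \<ge> 1" and a: "a > 0" and x: "x \<in> ellipsoid (l*a)"
  shows "inverse (sqrt l) *\<^sub>R x \<in> ellipsoid a"
proof -
  define P where "P = pi * ((x$1)^2 + (x$2)^2)"
  define Q where "Q = pi * ((x$3)^2 + (x$4)^2)"
  have P0: "P \<ge> 0" "Q \<ge> 0" unfolding P_def Q_def by auto
  have h: "P + Q/(l*a) < 1" using x unfolding ellipsoid_def P_def Q_def by simp
  have t2: "(inverse (sqrt l))^2 = 1/l" using l by (simp add: power_inverse divide_inverse)
  have "pi * (((inverse (sqrt l) *\<^sub>R x)$1)^2 + ((inverse (sqrt l) *\<^sub>R x)$2)^2)
      + pi * (((inverse (sqrt l) *\<^sub>R x)$3)^2 + ((inverse (sqrt l) *\<^sub>R x)$4)^2) / a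
      = P / l + Q / (l*a)"
    using l a unfolding P_def Q_def by (simp add: power_mult_distrib t2 field_simps)
  also have "P / l \<le> P" using P0 l by (simp add: divide_le_eq mult_le_cancel_left1)
  then have "P / l + Q/(l*a) < 1" using h by linarith
  finally show ?thesis unfolding ellipsoid_def by simp
qed

lemma omega_scale: "omega4 (c *\<^sub>R u) (c *\<^sub>R v) = c^2 * omega4 u v"
  by (simp add: omega4_def power2_eq_square algebra_simps)

lemma embed_scale:
  assumes l: "l \<ge> 1" and a: "a > 0"
    and e: "symplectic_embedding \<phi> (ellipsoid a) (polydisk A)"
  shows "symplectic_embedding (\<lambda>x. sqrt l *\<^sub>R \<phi> (inverse (sqrt l) *\<^sub>R x)) (ellipsoid (l*a)) (polydisk (l*A))"
proof -
  define s where "s = sqrt l"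
  define t where "t = inverse s"
  have s0: "s > 0" using l unfolding s_def by simp
  have st: "s * t = 1" "t * s = 1" using s0 unfolding t_def by auto
  have s2: "s^2 = l" using l unfolding s_def by simp
  let ?U = "ellipsoid (l*a)" and ?E = "ellipsoid a"
  define \<psi> where "\<psi> = (\<lambda>x. s *\<^sub>R \<phi> (t *\<^sub>R x))"
  have mem: "\<And>x. x \<in> ?U \<Longrightarrow> t *\<^sub>R x \<in> ?E"
    using ell_scale[OF l a] unfolding t_def s_def by blast
  from e have sm: "smooth_on ?E \<phi>" and inj: "inj_on \<phi> ?E"
    and ci: "continuous_on (\<phi> ` ?E) (inv_into ?E \<phi>)" and im: "\<phi> ` ?E \<subseteq> polydisk A"
    and dd: "\<forall>x\<in>?E. \<exists>D. (\<phi> has_derivative D) (at x) \<and> (\<forall>u v. omega4 (D u) (D v) = omega4 u v)"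
    unfolding symplectic_embedding_def by auto
  have 1: "smooth_on ?U \<psi>"
    using sm mem unfolding smooth_on_def \<psi>_def by (blast intro: Ck_scale)
  have 2: "inj_on \<psi> ?U"
  proof (rule inj_onI)
    fix x y assume x: "x \<in> ?U" and y: "y \<in> ?U" and eq: "\<psi> x = \<psi> y"
    then have "\<phi> (t *\<^sub>R x) = \<phi> (t *\<^sub>R y)" using s0 unfolding \<psi>_def by simp
    then have "t *\<^sub>R x = t *\<^sub>R y" using inj mem[OF x] mem[OF y] by (meson inj_onD)
    then show "x = y" using st by (metis scaleR_cancel_left zero_neq_one mult_zero_left)
  qed
  have 3: "continuous_on (\<psi> ` ?U) (inv_into ?U \<psi>)"
  proof -
    have "continuous_on (\<psi> ` ?U) (\<lambda>y. s *\<^sub>R inv_into ?E \<phi> (t *\<^sub>R y))"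
    proof -
      have "continuous_on (\<psi> ` ?U) (inv_into ?E \<phi> \<circ> (\<lambda>y. t *\<^sub>R y))"
      proof (rule continuous_on_compose)
        show "continuous_on (\<psi> ` ?U) (\<lambda>y. t *\<^sub>R y)" by (intro continuous_intros)
        have "(\<lambda>y. t *\<^sub>R y) ` \<psi> ` ?U \<subseteq> \<phi> ` ?E"
          using mem st by (auto simp: \<psi>_def)
        then show "continuous_on ((\<lambda>y. t *\<^sub>R y) ` \<psi> ` ?U) (inv_into ?E \<phi>)"
          using ci continuous_on_subset by blast
      qed
      then show ?thesis by (auto simp: o_def intro!: continuous_intros)
    qed
    moreover have "\<And>y. y \<in> \<psi> ` ?U \<Longrightarrow> inv_into ?U \<psi> y = s *\<^sub>R inv_into ?E \<phi> (t *\<^sub>R y)"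
    proof -
      fix y assume "y \<in> \<psi> ` ?U"
      then obtain x where x: "x \<in> ?U" and y: "y = \<psi> x" by auto
      have "inv_into ?U \<psi> y = x" using 2 x y by simp
      moreover have "t *\<^sub>R y = \<phi> (t *\<^sub>R x)" using y st by (simp add: \<psi>_def)
      then have "inv_into ?E \<phi> (t *\<^sub>R y) = t *\<^sub>R x" using inj mem[OF x] by simp
      ultimately show "inv_into ?U \<psi> y = s *\<^sub>R inv_into ?E \<phi> (t *\<^sub>R y)" using st by simp
    qed
    ultimately show ?thesis using continuous_on_cong by (metis (no_types, lifting))
  qed
  have 4: "\<psi> ` ?U \<subseteq> polydisk (l*A)"
  proof
    fix y assume "y \<in> \<psi> ` ?U"
    then obtain x where x: "x \<in> ?U" and y: "y = \<psi> x" by auto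
    define w where "w = \<phi> (t *\<^sub>R x)"
    have w: "w \<in> polydisk A" using im mem[OF x] unfolding w_def by auto
    have "y = s *\<^sub>R w" using y unfolding w_def \<psi>_def by simp
    moreover have "pi * ((w$1)^2 + (w$2)^2) < A" "pi * ((w$3)^2 + (w$4)^2) < A"
      using w unfolding polydisk_def by auto
    ultimately show "y \<in> polydisk (l*A)" unfolding polydisk_def
      using l by (simp add: power_mult_distrib s2 algebra_simps[symmetric])
  qed
  have 5: "\<forall>x\<in>?U. \<exists>D. (\<psi> has_derivative D) (at x) \<and> (\<forall>u v. omega4 (D u) (D v) = omega4 u v)"
  proof
    fix x assume x: "x \<in> ?U"
    obtain D where D: "(\<phi> has_derivative D) (at (t *\<^sub>R x))"
      and om: "\<forall>u v. omega4 (D u) (D v) = omega4 u v" using dd mem[OF x] by blast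
    have sd: "((\<lambda>x. t *\<^sub>R x) has_derivative (\<lambda>h. t *\<^sub>R h)) (at x)"
      by (intro derivative_eq_intros) auto
    have "((\<lambda>x. \<phi> (t *\<^sub>R x)) has_derivative (\<lambda>h. D (t *\<^sub>R h))) (at x)"
      using has_derivative_compose[OF sd D] by (simp add: o_def)
    then have "(\<psi> has_derivative (\<lambda>h. s *\<^sub>R D (t *\<^sub>R h))) (at x)"
      unfolding \<psi>_def by (intro derivative_intros)
    moreover have "\<forall>u v. omega4 (s *\<^sub>R D (t *\<^sub>R u)) (s *\<^sub>R D (t *\<^sub>R v)) = omega4 u v"
      using om st by (simp add: omega_scale power2_eq_square)
         (metis (no_types) mult.assoc mult.commute mult_1)
    ultimately show "\<exists>D. (\<psi> has_derivative D) (at x) \<and> (\<forall>u v. omega4 (D u) (D v) = omega4 u v)"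
      by blast
  qed
  show ?thesis using 1 2 3 4 5 unfolding symplectic_embedding_def \<psi>_def s_def t_def by blast
qed


lemma id_embed:
  assumes a: "a \<ge> 1"
  shows "symplectic_embedding (\<lambda>x. x) (ellipsoid a) (polydisk (a+1))"
proof -
  have im: "ellipsoid a \<subseteq> polydisk (a+1)"
  proof
    fix z :: "real^4" assume z: "z \<in> ellipsoid a"
    define P where "P = pi * ((z$1)^2 + (z$2)^2)"
    define Q where "Q = pi * ((z$3)^2 + (z$4)^2)"
    have P0: "P \<ge> 0" "Q \<ge> 0" unfolding P_def Q_def by auto
    have h: "P + Q/a < 1" using z unfolding ellipsoid_def P_def Q_def by simp
    have "Q/a < 1" using h P0 by linarith
    then have "Q < a" using a by (simp add: divide_less_eq)
    moreover have "P < a + 1" using h P0 a by (smt (verit) divide_nonneg_pos)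
    ultimately show "z \<in> polydisk (a+1)" unfolding polydisk_def P_def Q_def by simp
  qed
  have ci: "continuous_on ((\<lambda>x. x) ` ellipsoid a) (inv_into (ellipsoid a) (\<lambda>x. x))"
  proof -
    have "continuous_on (ellipsoid a) (\<lambda>x::real^4. x)" by (rule continuous_on_id)
    moreover have "\<And>y. y \<in> ellipsoid a \<Longrightarrow> inv_into (ellipsoid a) (\<lambda>x. x) y = y"
      by (simp add: inv_into_f_eq)
    ultimately show ?thesis by (simp add: continuous_on_cong)
  qed
  show ?thesis unfolding symplectic_embedding_def smooth_on_def
    using im ci Ck_id by (auto intro!: exI[of _ "\<lambda>h. h"] has_derivative_ident)
qed

theorem lemma4p2:
  fixes a l :: real
  assumes "a \<ge> 1" and "l \<ge> 1"
  shows "cap (l * a) / (l * a) \<le> cap a / a"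
proof -
  define S where "S b = {A::real. 0 < A \<and> (\<exists>\<phi>. symplectic_embedding \<phi> (ellipsoid b) (polydisk A))}" for b
  have capS: "cap b = Inf (S b)" for b unfolding cap_def S_def by simp
  have bdd: "bdd_below (S b)" for b unfolding S_def by (rule bdd_belowI[of _ 0]) auto
  have ne: "S a \<noteq> {}" using id_embed[OF assms(1)] assms(1) unfolding S_def by force
  have l0: "l > 0" and a0: "a > 0" using assms by auto
  have "cap (l*a) / l \<le> cap a"
    unfolding capS
  proof (rule cInf_greatest[OF ne])
    fix A assume A: "A \<in> S a"
    then obtain \<phi> where "symplectic_embedding \<phi> (ellipsoid a) (polydisk A)" and "A > 0"
      unfolding S_def by auto
    then have "l*A \<in> S (l*a)" using embed_scale[OF assms(2) a0] l0 unfolding S_def by auto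
    then have "Inf (S (l*a)) \<le> l*A" by (rule cInf_lower[OF _ bdd])
    then show "Inf (S (l*a)) / l \<le> A" using l0 by (simp add: divide_le_eq mult.commute)
  qed
  then have "cap (l*a) / l / a \<le> cap a / a" using a0 by (intro divide_right_mono) auto
  moreover have "cap (l*a) / l / a = cap (l * a) / (l * a)" by simp
  ultimately show ?thesis by simp
qed

end
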